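(* Let $A\in\mathbb{C}^{2^n\times 2^n}$. The local $C$-numerical range $W_{\mathrm{loc}}(C,A)$ is rotationally symmetric for all $C\in\mathbb{C}^{2^n\times 2^n}$ if and only if there exist $U\in SU_{\mathrm{loc}}(2^n)$, $\Delta\in\mathfrak{t}_{\mathrm{loc}}$ and $\varphi\in\mathbb{R}$, $\varphi\neq 0$, such that $[\Delta,UAU^\dagger]=i\varphi\,UAU^\dagger$.
   Context: $SU_{\mathrm{loc}}(2^n)=\{U_1\otimes\cdots\otimes U_n\mid U_k\in SU(2)\}$. $W_{\mathrm{loc}}(C,A)=\{\mathrm{tr}(C^\dagger UAU^\dagger)\mid U\in SU_{\mathrm{loc}}(2^n)\}$. A subset $W\subset\mathbb{C}$ is rotationally symmetric if $e^{i\varphi}W=W$ for all $\varphi\in\mathbb{R}$. $\mathfrak{t}_{\mathrm{loc}}$ is the set of diagonal matrices in the Lie algebra of $SU_{\mathrm{loc}}(2^n)$, i.e. all matrices $\sum_{j=1}^n I_2\otimes\cdots\otimes I_2\otimes\mathrm{diag}(i\lambda_j,-i\lambda_j)\otimes I_2\otimes\cdots\otimes I_2$ (the diagonal factor in the $j$-th position) with $\lambda_j\in\mathbb{R}$. $[X,Y]=XY-YX$. *)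

theory Defs
  imports Complex_Main "Jordan_Normal_Form.Determinant"
begin

definition mtrace :: "complex mat \<Rightarrow> complex" where
  "mtrace M = (\<Sum>i<dim_row M. M $$ (i, i))"

definition adj :: "complex mat \<Rightarrow> complex mat" where
  "adj M = mat (dim_col M) (dim_row M) (\<lambda>(i, j). cnj (M $$ (j, i)))"

definition kron :: "complex mat \<Rightarrow> complex mat \<Rightarrow> complex mat" where
  "kron A B = mat (dim_row A * dim_row B) (dim_col A * dim_col B)
     (\<lambda>(i, j). A $$ (i div dim_row B, j div dim_col B) * B $$ (i mod dim_row B, j mod dim_col B))"

definition tensor_list :: "complex mat list \<Rightarrow> complex mat" where
  "tensor_list Us = foldr kron Us (1\<^sub>m 1)"

definition SU2 :: "complex mat set" where
  "SU2 = {U. U \<in> carrier_mat 2 2 \<and> adj U * U = 1\<^sub>m 2 \<and> det U = 1}"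

definition SU_loc :: "nat \<Rightarrow> complex mat set" where
  "SU_loc n = {tensor_list Us | Us. length Us = n \<and> (\<forall>U \<in> set Us. U \<in> SU2)}"

definition W_loc :: "nat \<Rightarrow> complex mat \<Rightarrow> complex mat \<Rightarrow> complex set" where
  "W_loc n C A = {mtrace (adj C * (U * A * adj U)) | U. U \<in> SU_loc n}"

definition rot_symmetric :: "complex set \<Rightarrow> bool" where
  "rot_symmetric W \<longleftrightarrow> (\<forall>\<phi>::real. (\<lambda>z. cis \<phi> * z) ` W = W)"

definition diag_su2 :: "real \<Rightarrow> complex mat" where
  "diag_su2 l = mat 2 2 (\<lambda>(a, b). if a = b then (if a = 0 then \<i> * of_real l else - \<i> * of_real l) else 0)"

definition local_diag :: "nat \<Rightarrow> nat \<Rightarrow> real \<Rightarrow> complex mat" where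
  "local_diag n j l = tensor_list ((replicate n (1\<^sub>m 2))[j := diag_su2 l])"

(* t_loc: diagonal matrices in the Lie algebra of SU_loc(2^n) *)
definition t_loc :: "nat \<Rightarrow> complex mat set" where
  "t_loc n = {foldr (+) (map (\<lambda>j. local_diag n j (lam j)) [0..<n]) (0\<^sub>m (2^n) (2^n)) | lam. True}"

end

theory Submission
  imports Defs
begin


lemma mult_entry:
  assumes "i < dim_row A" "j < dim_col B" "dim_col A = dim_row B"
  shows "(A * B) $$ (i, j) = (\<Sum>k<dim_row B. A $$ (i, k) * B $$ (k, j))"
  using assms by (simp add: index_mult_mat scalar_prod_def lessThan_atLeast0)

lemma sum_split_mult:
  fixes g :: "nat \<Rightarrow> 'a::comm_monoid_add"
  assumes "b > 0"
  shows "(\<Sum>t<a*b. g t) = (\<Sum>s<a. \<Sum>r<b. g (s*b + r))"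
proof -
  have "(\<Sum>t<a*b. g t) = (\<Sum>s<a. sum g {s*b..<s*b+b})"
    by (rule sum.nat_group[symmetric])
  also have "\<dots> = (\<Sum>s<a. \<Sum>r<b. g (s*b + r))"
  proof (rule sum.cong[OF refl])
    fix s
    show "sum g {s*b..<s*b+b} = (\<Sum>r<b. g (s*b + r))"
    proof -
      have "sum g {0+s*b..<b+s*b} = (\<Sum>r=0..<b. g (r+s*b))"
        by (rule sum.shift_bounds_nat_ivl)
      then show ?thesis by (simp add: lessThan_atLeast0 add.commute)
    qed
  qed
  finally show ?thesis .
qed

lemma kron_dims[simp]: "dim_row (kron A B) = dim_row A * dim_row B"
  "dim_col (kron A B) = dim_col A * dim_col B"
  by (auto simp: kron_def)

lemma kron_carrier: "A \<in> carrier_mat m k \<Longrightarrow> B \<in> carrier_mat m' k' \<Longrightarrow> kron A B \<in> carrier_mat (m*m') (k*k')"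
  by (metis carrier_matD(1) carrier_matD(2) carrier_matI kron_dims(1) kron_dims(2))

lemma kron_index: "i < dim_row A * dim_row B \<Longrightarrow> j < dim_col A * dim_col B \<Longrightarrow>
  kron A B $$ (i,j) = A $$ (i div dim_row B, j div dim_col B) * B $$ (i mod dim_row B, j mod dim_col B)"
  by (simp add: kron_def)

lemma kron_mult:
  assumes A: "A \<in> carrier_mat m k" and C: "C \<in> carrier_mat k p"
    and B: "B \<in> carrier_mat m' k'" and D: "D \<in> carrier_mat k' p'" and k': "k' > 0"
  shows "kron A B * kron C D = kron (A*C) (B*D)"
proof (rule eq_matI)
  show "dim_row (kron A B * kron C D) = dim_row (kron (A*C) (B*D))"
    "dim_col (kron A B * kron C D) = dim_col (kron (A*C) (B*D))" using assms by auto
  fix i j assume i: "i < dim_row (kron (A*C) (B*D))" and j: "j < dim_col (kron (A*C) (B*D))"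
  have im: "i < m*m'" and jp: "j < p*p'" using i j A B C D by auto
  have m': "m' > 0" using im by (cases m') auto
  have p': "p' > 0" using jp by (cases p') auto
  have i1: "i div m' < m" using im m' by (simp add: less_mult_imp_div_less)
  have i2: "i mod m' < m'" using m' by simp
  have j1: "j div p' < p" using jp p' by (simp add: less_mult_imp_div_less)
  have j2: "j mod p' < p'" using p' by simp
  have "(kron A B * kron C D) $$ (i,j) = (\<Sum>t<k*k'. kron A B $$ (i,t) * kron C D $$ (t,j))"
    using im jp A B C D by (subst mult_entry) auto
  also have "\<dots> = (\<Sum>s<k. \<Sum>r<k'. kron A B $$ (i,s*k'+r) * kron C D $$ (s*k'+r,j))"
    by (rule sum_split_mult[OF k'])
  also have "\<dots> = (\<Sum>s<k. \<Sum>r<k'. (A $$ (i div m', s) * C $$ (s, j div p')) * (B $$ (i mod m', r) * D $$ (r, j mod p')))"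
  proof (intro sum.cong refl)
    fix s r assume s: "s \<in> {..<k}" and r: "r \<in> {..<k'}"
    have t0: "(s+1)*k' \<le> k*k'" using s by (intro mult_right_mono) auto
    have t: "s*k'+r < k*k'" using t0 r by simp
    have d: "(s*k'+r) div k' = s" "(s*k'+r) mod k' = r" using r k' by auto
    show "kron A B $$ (i,s*k'+r) * kron C D $$ (s*k'+r,j) =
      (A $$ (i div m', s) * C $$ (s, j div p')) * (B $$ (i mod m', r) * D $$ (r, j mod p'))"
      using A B C D im jp t r by (simp add: kron_index d)
  qed
  also have "\<dots> = (\<Sum>s<k. A $$ (i div m', s) * C $$ (s, j div p')) * (\<Sum>r<k'. B $$ (i mod m', r) * D $$ (r, j mod p'))"
    by (simp add: sum_product)
  also have "\<dots> = kron (A*C) (B*D) $$ (i,j)"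
  proof -
    have e1: "(A*C) $$ (i div m', j div p') = (\<Sum>s<k. A $$ (i div m', s) * C $$ (s, j div p'))"
      using A C i1 j1 by (subst mult_entry) auto
    have e2: "(B*D) $$ (i mod m', j mod p') = (\<Sum>r<k'. B $$ (i mod m', r) * D $$ (r, j mod p'))"
      using B D i2 j2 by (subst mult_entry) auto
    show ?thesis using A B C D im jp by (simp add: kron_index e1 e2)
  qed
  finally show "(kron A B * kron C D) $$ (i,j) = kron (A*C) (B*D) $$ (i,j)" .
qed

lemma adj_dims[simp]: "dim_row (adj A) = dim_col A" "dim_col (adj A) = dim_row A"
  by (auto simp: adj_def)

lemma adj_index[simp]: "i < dim_col A \<Longrightarrow> j < dim_row A \<Longrightarrow> adj A $$ (i,j) = cnj (A $$ (j,i))"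
  by (simp add: adj_def)

lemma adj_carrier: "A \<in> carrier_mat m k \<Longrightarrow> adj A \<in> carrier_mat k m"
  by (metis carrier_matD(1) carrier_matD(2) carrier_matI adj_dims(1) adj_dims(2))

lemma adj_adj[simp]: "adj (adj A) = A"
  by (rule eq_matI) auto

lemma adj_kron: "adj (kron A B) = kron (adj A) (adj B)"
proof (rule eq_matI)
  fix i j assume "i < dim_row (kron (adj A) (adj B))" "j < dim_col (kron (adj A) (adj B))"
  then have i: "i < dim_col A * dim_col B" and j: "j < dim_row A * dim_row B" by auto
  have "dim_col B > 0" using i by (cases "dim_col B") auto
  moreover have "dim_row B > 0" using j by (cases "dim_row B") auto
  moreover have "i div dim_col B < dim_col A" using i by (simp add: less_mult_imp_div_less)
  moreover have "j div dim_row B < dim_row A" using j by (simp add: less_mult_imp_div_less)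
  ultimately show "adj (kron A B) $$ (i,j) = kron (adj A) (adj B) $$ (i,j)"
    using i j by (simp add: kron_index)
qed auto

lemma adj_mult: "A \<in> carrier_mat m k \<Longrightarrow> B \<in> carrier_mat k p \<Longrightarrow> adj (A * B) = adj B * adj A"
proof (rule eq_matI)
  fix i j assume A: "A \<in> carrier_mat m k" and B: "B \<in> carrier_mat k p"
    and "i < dim_row (adj B * adj A)" "j < dim_col (adj B * adj A)"
  then have i: "i < p" and j: "j < m" by auto
  show "adj (A * B) $$ (i,j) = (adj B * adj A) $$ (i,j)"
  proof -
    have "adj (A * B) $$ (i,j) = cnj (\<Sum>t<k. A $$ (j,t) * B $$ (t,i))"
    proof -
      have "(A*B) $$ (j,i) = (\<Sum>t<k. A $$ (j,t) * B $$ (t,i))"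
        using A B i j by (subst mult_entry) auto
      then show ?thesis using A B i j by simp
    qed
    also have "\<dots> = (\<Sum>t<k. adj B $$ (i,t) * adj A $$ (t,j))"
      using A B i j by (simp add: mult.commute)
    also have "\<dots> = (adj B * adj A) $$ (i,j)"
      using A B i j by (subst mult_entry) auto
    finally show ?thesis .
  qed
qed auto

lemma kron_one: "kron (1\<^sub>m a) (1\<^sub>m b) = 1\<^sub>m (a*b)"
proof (rule eq_matI)
  fix i j assume "i < dim_row (1\<^sub>m (a*b))" "j < dim_col (1\<^sub>m (a*b))"
  then have i: "i < a*b" and j: "j < a*b" by auto
  have b: "b > 0" using i by (cases b) auto
  have "i div b < a" "j div b < a" using i j by (auto simp: less_mult_imp_div_less)
  moreover have "(i div b = j div b \<and> i mod b = j mod b) \<longleftrightarrow> i = j"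
    by (metis div_mult_mod_eq)
  ultimately show "kron (1\<^sub>m a) (1\<^sub>m b) $$ (i,j) = 1\<^sub>m (a*b) $$ (i,j)"
    using i j b by (auto simp: kron_index)
qed auto



definition m2 :: "complex \<Rightarrow> complex \<Rightarrow> complex \<Rightarrow> complex \<Rightarrow> complex mat" where
  "m2 a b c d = mat 2 2 (\<lambda>(i,j). if i = 0 then (if j = 0 then a else b) else (if j = 0 then c else d))"

lemma m2_carrier[simp]: "m2 a b c d \<in> carrier_mat 2 2"
  by (simp add: m2_def)

lemma m2_dims[simp]: "dim_row (m2 a b c d) = 2" "dim_col (m2 a b c d) = 2"
  by (simp_all add: m2_def)

lemma m2_index[simp]: "m2 a b c d $$ (0,0) = a" "m2 a b c d $$ (0,1) = b"
  "m2 a b c d $$ (1,0) = c" "m2 a b c d $$ (1,1) = d"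
  "m2 a b c d $$ (0,Suc 0) = b" "m2 a b c d $$ (Suc 0,0) = c" "m2 a b c d $$ (Suc 0,Suc 0) = d"
  by (simp_all add: m2_def)

lemma less2: "(i::nat) < 2 \<longleftrightarrow> i = 0 \<or> i = 1" by auto

lemma sum2: "(\<Sum>k<(2::nat). f k) = f 0 + (f 1 :: complex)"
  by (simp add: numeral_2_eq_2)

lemma m2_eqI: assumes "M \<in> carrier_mat 2 2" "N \<in> carrier_mat 2 2"
  "M $$ (0,0) = N $$ (0,0)" "M $$ (0,1) = N $$ (0,1)" "M $$ (1,0) = N $$ (1,0)" "M $$ (1,1) = N $$ (1,1)"
  shows "M = N"
proof (rule eq_matI)
  fix i j assume "i < dim_row N" "j < dim_col N"
  then have "i = 0 \<or> i = 1" "j = 0 \<or> j = 1" using assms(2) by auto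
  then show "M $$ (i,j) = N $$ (i,j)" using assms by auto
qed (use assms in auto)

lemma m2_of: "M \<in> carrier_mat 2 2 \<Longrightarrow> M = m2 (M $$ (0,0)) (M $$ (0,1)) (M $$ (1,0)) (M $$ (1,1))"
  by (rule m2_eqI) auto

lemma m2_eq_iff: "m2 a b c d = m2 a' b' c' d' \<longleftrightarrow> a = a' \<and> b = b' \<and> c = c' \<and> d = d'"
  by (metis m2_index)

lemma m2_mult: "m2 a b c d * m2 e f g h = m2 (a*e+b*g) (a*f+b*h) (c*e+d*g) (c*f+d*h)"
proof -
  have e: "(m2 a b c d * m2 e f g h) $$ (i,j) = m2 a b c d $$ (i,0) * m2 e f g h $$ (0,j) + m2 a b c d $$ (i,1) * m2 e f g h $$ (1,j)"
    if "i < 2" "j < 2" for i j using that by (subst mult_entry) (auto simp: sum2)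
  show ?thesis by (rule m2_eqI) (auto simp: e simp del: index_mult_mat intro!: mult_carrier_mat[of _ 2 2 _ 2])
qed

lemma m2_adj: "adj (m2 a b c d) = m2 (cnj a) (cnj c) (cnj b) (cnj d)"
  by (rule m2_eqI) (auto intro: carrier_matI)

lemma m2_one: "1\<^sub>m 2 = m2 1 0 0 1"
  by (rule m2_eqI) auto

lemma m2_det: "det (m2 a b c d) = a*d - b*c"
proof -
  have "det (m2 a b c d) = (\<Sum>i<2. m2 a b c d $$ (i,0) * cofactor (m2 a b c d) i 0)"
    by (rule laplace_expansion_column) auto
  also have "\<dots> = a * cofactor (m2 a b c d) 0 0 + c * cofactor (m2 a b c d) 1 0"
    by (simp add: sum2)
  also have "cofactor (m2 a b c d) 0 0 = d"
    unfolding cofactor_def by (subst det_single) (auto simp: mat_delete_def m2_def intro!: carrier_matI)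
  also have "cofactor (m2 a b c d) 1 0 = - b"
    unfolding cofactor_def by (subst det_single) (auto simp: mat_delete_def m2_def intro!: carrier_matI)
  finally show ?thesis by simp
qed



definition su :: "complex \<Rightarrow> complex \<Rightarrow> complex mat" where
  "su a b = m2 a (- cnj b) b (cnj a)"

lemma su_in_SU2: assumes "a * cnj a + b * cnj b = 1" shows "su a b \<in> SU2"
proof -
  have "adj (su a b) * su a b = m2 (a * cnj a + b * cnj b) 0 0 (a * cnj a + b * cnj b)"
    by (simp add: su_def m2_adj m2_mult algebra_simps)
  also have "\<dots> = 1\<^sub>m 2" using assms by (simp add: m2_one)
  finally show ?thesis using assms by (simp add: SU2_def su_def m2_det algebra_simps)
qed

lemma SU2_su: assumes "U \<in> SU2" shows "\<exists>a b. U = su a b \<and> a * cnj a + b * cnj b = 1"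
proof -
  have U: "U \<in> carrier_mat 2 2" "adj U * U = 1\<^sub>m 2" "det U = 1" using assms by (auto simp: SU2_def)
  define p q r s where "p = U $$ (0,0)" "q = U $$ (0,1)" "r = U $$ (1,0)" "s = U $$ (1,1)"
  have Ue: "U = m2 p q r s" unfolding p_q_r_s_def by (rule m2_of[OF U(1)])
  have "m2 (cnj p * p + cnj r * r) (cnj p * q + cnj r * s) (cnj q * p + cnj s * r) (cnj q * q + cnj s * s) = m2 1 0 0 1"
    using U(2) by (simp add: Ue m2_adj m2_mult m2_one)
  then have E1: "cnj p * p + cnj r * r = 1" and E2: "cnj p * q + cnj r * s = 0"
    by (simp_all add: m2_eq_iff)
  have E2': "cnj p * q = - (cnj r * s)" using E2 by (simp add: eq_neg_iff_add_eq_0)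
  have D: "p * s - q * r = 1" using U(3) by (simp add: Ue m2_det)
  have "cnj p = cnj p * (p * s - q * r)" using D by simp
  also have "\<dots> = s * (cnj p * p) - r * (cnj p * q)" by (simp add: algebra_simps)
  also have "\<dots> = s * (cnj p * p) + r * (cnj r * s)" using E2' by simp
  also have "\<dots> = s * (cnj p * p + cnj r * r)" by (simp add: algebra_simps)
  finally have S: "s = cnj p" using E1 by simp
  have "cnj r = cnj r * (p * s - q * r)" using D by simp
  also have "\<dots> = p * (cnj r * s) - q * (cnj r * r)" by (simp add: algebra_simps)
  also have "\<dots> = - p * (cnj p * q) - q * (cnj r * r)" using E2' by simp
  also have "\<dots> = - q * (cnj p * p + cnj r * r)" by (simp add: algebra_simps)
  finally have Q: "q = - cnj r" using E1 by simp
  have "U = su p r" using Ue S Q by (simp add: su_def)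
  moreover have "p * cnj p + r * cnj r = 1" using E1 by (simp add: mult.commute)
  ultimately show ?thesis by blast
qed

lemma SU2_iff: "U \<in> SU2 \<longleftrightarrow> (\<exists>a b. U = su a b \<and> a * cnj a + b * cnj b = 1)"
  using SU2_su su_in_SU2 by blast

lemma su_mult: "su a b * su c d = su (a*c - cnj b * d) (b*c + cnj a * d)"
  by (simp add: su_def m2_mult m2_eq_iff algebra_simps)

lemma su_adj: "adj (su a b) = su (cnj a) (- b)"
  by (simp add: su_def m2_adj)

lemma SU2_mult: "U \<in> SU2 \<Longrightarrow> V \<in> SU2 \<Longrightarrow> U * V \<in> SU2"
proof -
  assume "U \<in> SU2" "V \<in> SU2"
  then obtain a b c d where U: "U = su a b" "a * cnj a + b * cnj b = 1" and V: "V = su c d" "c * cnj c + d * cnj d = 1"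
    using SU2_su by metis
  have "(a*c - cnj b * d) * cnj (a*c - cnj b * d) + (b*c + cnj a * d) * cnj (b*c + cnj a * d)
     = (a * cnj a + b * cnj b) * (c * cnj c + d * cnj d)"
    by (simp add: algebra_simps)
  then show ?thesis using U V by (simp add: su_mult su_in_SU2)
qed

lemma SU2_adj: "U \<in> SU2 \<Longrightarrow> adj U \<in> SU2"
proof -
  assume "U \<in> SU2"
  then obtain a b where U: "U = su a b" "a * cnj a + b * cnj b = 1" using SU2_su by metis
  have "cnj a * cnj (cnj a) + (-b) * cnj (-b) = 1" using U(2) by (simp add: mult.commute)
  then show ?thesis using U by (simp add: su_adj su_in_SU2)
qed

lemma SU2_one: "1\<^sub>m 2 \<in> SU2"
proof -
  have "1\<^sub>m 2 = su 1 0" by (simp add: su_def m2_one)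
  then show ?thesis using su_in_SU2[of 1 0] by simp
qed

lemma SU2_carrier: "U \<in> SU2 \<Longrightarrow> U \<in> carrier_mat 2 2"
  by (simp add: SU2_def)

lemma SU2_unitary: "U \<in> SU2 \<Longrightarrow> adj U * U = 1\<^sub>m 2 \<and> U * adj U = 1\<^sub>m 2"
proof -
  assume "U \<in> SU2"
  then obtain a b where U: "U = su a b" "a * cnj a + b * cnj b = 1" using SU2_su by metis
  have "U * adj U = m2 (a * cnj a + b * cnj b) 0 0 (a * cnj a + b * cnj b)"
    using U by (simp add: su_def m2_adj m2_mult algebra_simps)
  then show ?thesis using U `U \<in> SU2` by (simp add: m2_one SU2_def)
qed

lemma tensor_list_Nil: "tensor_list [] = 1\<^sub>m 1" by (simp add: tensor_list_def)
lemma tensor_list_Cons: "tensor_list (U # Us) = kron U (tensor_list Us)" by (simp add: tensor_list_def)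

lemma tensor_list_carrier: "(\<forall>U \<in> set Us. U \<in> carrier_mat 2 2) \<Longrightarrow> tensor_list Us \<in> carrier_mat (2^length Us) (2^length Us)"
proof (induction Us)
  case Nil then show ?case by (simp add: tensor_list_Nil)
next
  case (Cons U Us)
  then have "kron U (tensor_list Us) \<in> carrier_mat (2 * 2^length Us) (2 * 2^length Us)"
    by (intro kron_carrier) auto
  then show ?case by (simp add: tensor_list_Cons)
qed

lemma tensor_list_mult: "length Us = length Vs \<Longrightarrow> (\<forall>U \<in> set Us. U \<in> carrier_mat 2 2) \<Longrightarrow> (\<forall>V \<in> set Vs. V \<in> carrier_mat 2 2)
  \<Longrightarrow> tensor_list Us * tensor_list Vs = tensor_list (map2 (*) Us Vs)"
proof (induction Us arbitrary: Vs)
  case Nil then show ?case by (simp add: tensor_list_Nil)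
next
  case (Cons U Us)
  then obtain V Vs' where Vs: "Vs = V # Vs'" by (cases Vs) auto
  have "kron U (tensor_list Us) * kron V (tensor_list Vs') = kron (U * V) (tensor_list Us * tensor_list Vs')"
  proof (rule kron_mult)
    show "U \<in> carrier_mat 2 2" "V \<in> carrier_mat 2 2" using Cons.prems Vs by auto
    show "tensor_list Us \<in> carrier_mat (2^length Us) (2^length Us)" using Cons.prems by (intro tensor_list_carrier) auto
    show "tensor_list Vs' \<in> carrier_mat (2^length Us) (2^length Us)" using Cons.prems Vs
      by (metis tensor_list_carrier length_Cons list.set_intros(2) nat.inject)
  qed auto
  then show ?case using Cons Vs by (simp add: tensor_list_Cons)
qed

lemma tensor_list_adj: "adj (tensor_list Us) = tensor_list (map adj Us)"
proof (induction Us)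
  case Nil
  have "adj (1\<^sub>m 1) = 1\<^sub>m 1" by (rule eq_matI) auto
  then show ?case by (simp add: tensor_list_Nil)
next
  case (Cons U Us) then show ?case by (simp add: tensor_list_Cons adj_kron)
qed

lemma tensor_list_one: "tensor_list (replicate n (1\<^sub>m 2)) = 1\<^sub>m (2^n)"
  by (induction n) (auto simp: tensor_list_Nil tensor_list_Cons kron_one)

lemma SU_loc_carrier: "U \<in> SU_loc n \<Longrightarrow> U \<in> carrier_mat (2^n) (2^n)"
proof -
  assume "U \<in> SU_loc n"
  then obtain Us where U: "U = tensor_list Us" "length Us = n" "\<forall>U\<in>set Us. U \<in> SU2"
    unfolding SU_loc_def by blast
  then show ?thesis using tensor_list_carrier[of Us] by (auto simp: SU2_carrier)
qed

lemma SU_loc_one: "1\<^sub>m (2^n) \<in> SU_loc n"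
  unfolding SU_loc_def using SU2_one
  by (auto intro!: exI[of _ "replicate n (1\<^sub>m 2)"] simp: tensor_list_one)

lemma SU_loc_adj: "U \<in> SU_loc n \<Longrightarrow> adj U \<in> SU_loc n"
proof -
  assume "U \<in> SU_loc n"
  then obtain Us where U: "U = tensor_list Us" "length Us = n" "\<forall>U\<in>set Us. U \<in> SU2"
    unfolding SU_loc_def by blast
  then have "adj U = tensor_list (map adj Us)" "length (map adj Us) = n" "\<forall>V\<in>set (map adj Us). V \<in> SU2"
    by (auto simp: tensor_list_adj SU2_adj)
  then show ?thesis unfolding SU_loc_def by blast
qed

lemma map2_adj_left: "\<forall>U\<in>set Us. U \<in> SU2 \<Longrightarrow> map2 (*) (map adj Us) Us = replicate (length Us) (1\<^sub>m 2)"
  by (induction Us) (auto simp: SU2_unitary)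

lemma map2_adj_right: "\<forall>U\<in>set Us. U \<in> SU2 \<Longrightarrow> map2 (*) Us (map adj Us) = replicate (length Us) (1\<^sub>m 2)"
  by (induction Us) (auto simp: SU2_unitary)

lemma set_map2_SU2: "\<forall>U\<in>set Us. U \<in> SU2 \<Longrightarrow> \<forall>V\<in>set Vs. V \<in> SU2 \<Longrightarrow> \<forall>W \<in> set (map2 (*) Us Vs). W \<in> SU2"
  by (auto dest!: set_zip_leftD set_zip_rightD intro: SU2_mult simp: set_zip)

lemma SU_loc_mult: "U \<in> SU_loc n \<Longrightarrow> V \<in> SU_loc n \<Longrightarrow> U * V \<in> SU_loc n"
proof -
  assume "U \<in> SU_loc n" "V \<in> SU_loc n"
  then obtain Us Vs where U: "U = tensor_list Us" "length Us = n" "\<forall>U\<in>set Us. U \<in> SU2"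
    and V: "V = tensor_list Vs" "length Vs = n" "\<forall>V\<in>set Vs. V \<in> SU2"
    unfolding SU_loc_def by blast
  have "U * V = tensor_list (map2 (*) Us Vs)"
    using U V by (simp add: tensor_list_mult SU2_carrier)
  moreover have "\<forall>W \<in> set (map2 (*) Us Vs). W \<in> SU2"
  proof
    fix W assume "W \<in> set (map2 (*) Us Vs)"
    then obtain X Y where "W = X * Y" "(X,Y) \<in> set (zip Us Vs)" by auto
    then show "W \<in> SU2" using U V by (auto dest: set_zip_leftD set_zip_rightD intro: SU2_mult)
  qed
  moreover have "length (map2 (*) Us Vs) = n" using U V by simp
  ultimately show ?thesis unfolding SU_loc_def by blast
qed

lemma SU_loc_unitary: assumes "U \<in> SU_loc n" shows "adj U * U = 1\<^sub>m (2^n)" "U * adj U = 1\<^sub>m (2^n)"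
proof -
  obtain Us where U: "U = tensor_list Us" "length Us = n" "\<forall>U\<in>set Us. U \<in> SU2"
    using assms unfolding SU_loc_def by blast
  have c: "\<forall>U\<in>set Us. U \<in> carrier_mat 2 2" "\<forall>U\<in>set (map adj Us). U \<in> carrier_mat 2 2"
    using U by (auto simp: SU2_carrier adj_carrier)
  have "adj U * U = tensor_list (map2 (*) (map adj Us) Us)"
    using U c by (simp add: tensor_list_adj tensor_list_mult)
  also have "map2 (*) (map adj Us) Us = replicate n (1\<^sub>m 2)"
    using U by (simp add: map2_adj_left)
  finally show "adj U * U = 1\<^sub>m (2^n)" by (simp add: tensor_list_one)
  have "U * adj U = tensor_list (map2 (*) Us (map adj Us))"
    using U c by (simp add: tensor_list_adj tensor_list_mult)
  also have "map2 (*) Us (map adj Us) = replicate n (1\<^sub>m 2)"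
    using U by (simp add: map2_adj_right)
  finally show "U * adj U = 1\<^sub>m (2^n)" by (simp add: tensor_list_one)
qed



definition dmat :: "complex \<times> complex \<Rightarrow> complex mat" where
  "dmat d = m2 (fst d) 0 0 (snd d)"

fun ent :: "(complex \<times> complex) list \<Rightarrow> nat \<Rightarrow> complex" where
  "ent [] k = 1"
| "ent (d # ds) k = (if k div 2^length ds = 0 then fst d else snd d) * ent ds (k mod 2^length ds)"

fun phase :: "real list \<Rightarrow> nat \<Rightarrow> real" where
  "phase [] k = 0"
| "phase (a # as) k = (if k div 2^length as = 0 then a else - a) + phase as (k mod 2^length as)"

definition dg :: "nat \<Rightarrow> (nat \<Rightarrow> complex) \<Rightarrow> complex mat" where
  "dg N f = mat N N (\<lambda>(i,j). if i = j then f i else 0)"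

lemma dg_carrier[simp]: "dg N f \<in> carrier_mat N N" by (simp add: dg_def)
lemma dg_dims[simp]: "dim_row (dg N f) = N" "dim_col (dg N f) = N" by (simp_all add: dg_def)
lemma dg_index: "i < N \<Longrightarrow> j < N \<Longrightarrow> dg N f $$ (i,j) = (if i = j then f i else 0)" by (simp add: dg_def)

lemma tensor_dmat: "tensor_list (map dmat ds) = dg (2^length ds) (ent ds)"
proof (induction ds)
  case Nil
  show ?case by (rule eq_matI) (auto simp: tensor_list_Nil dg_def)
next
  case (Cons d ds)
  define M where "M = (2::nat)^length ds"
  have M: "M > 0" by (simp add: M_def)
  have "kron (dmat d) (dg M (ent ds)) = dg (2 * M) (ent (d # ds))"
  proof (rule eq_matI)
    fix i j assume ij: "i < dim_row (dg (2 * M) (ent (d # ds)))" "j < dim_col (dg (2 * M) (ent (d # ds)))"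
    then have i: "i < 2*M" and j: "j < 2*M" by auto
    have id: "i div M < 2" "j div M < 2" using i j by (auto simp: less_mult_imp_div_less mult.commute)
    have im: "i mod M < M" "j mod M < M" using M by auto
    have k: "kron (dmat d) (dg M (ent ds)) $$ (i,j) = dmat d $$ (i div M, j div M) * dg M (ent ds) $$ (i mod M, j mod M)"
      using i j by (subst kron_index) (auto simp: dmat_def)
    have eq: "i = j \<longleftrightarrow> i div M = j div M \<and> i mod M = j mod M" by (metis div_mult_mod_eq)
    have dm: "dmat d $$ (a, b) = (if a = b then (if a = 0 then fst d else snd d) else 0)" if "a < 2" "b < 2" for a b
      using that by (auto simp: dmat_def less2)
    show "kron (dmat d) (dg M (ent ds)) $$ (i,j) = dg (2 * M) (ent (d # ds)) $$ (i,j)"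
      using i j id im unfolding k by (auto simp: dm dg_index eq M_def)
  qed (auto simp: dmat_def)
  then show ?case using Cons by (simp add: tensor_list_Cons M_def del: ent.simps)
qed

lemma dg_mult_left: "B \<in> carrier_mat N N \<Longrightarrow> k < N \<Longrightarrow> l < N \<Longrightarrow> (dg N f * B) $$ (k,l) = f k * B $$ (k,l)"
proof -
  assume B: "B \<in> carrier_mat N N" and k: "k < N" and l: "l < N"
  have "(dg N f * B) $$ (k,l) = (\<Sum>t<N. dg N f $$ (k,t) * B $$ (t,l))" using B k l by (subst mult_entry) auto
  also have "\<dots> = (\<Sum>t<N. if t = k then f k * B $$ (k,l) else 0)"
    using k by (intro sum.cong) (auto simp: dg_index)
  also have "\<dots> = f k * B $$ (k,l)" using k by simp
  finally show ?thesis .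
qed

lemma dg_mult_right: "B \<in> carrier_mat N N \<Longrightarrow> k < N \<Longrightarrow> l < N \<Longrightarrow> (B * dg N f) $$ (k,l) = B $$ (k,l) * f l"
proof -
  assume B: "B \<in> carrier_mat N N" and k: "k < N" and l: "l < N"
  have "(B * dg N f) $$ (k,l) = (\<Sum>t<N. B $$ (k,t) * dg N f $$ (t,l))" using B k l by (subst mult_entry) auto
  also have "\<dots> = (\<Sum>t<N. if t = l then B $$ (k,l) * f l else 0)"
    using l by (intro sum.cong) (auto simp: dg_index)
  also have "\<dots> = B $$ (k,l) * f l" using l by simp
  finally show ?thesis .
qed

lemma adj_dg: "adj (dg N f) = dg N (\<lambda>k. cnj (f k))"
  by (rule eq_matI) (auto simp: dg_index)

lemma conj_dg: "B \<in> carrier_mat N N \<Longrightarrow> k < N \<Longrightarrow> l < N \<Longrightarrow>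
  (dg N f * B * adj (dg N f)) $$ (k,l) = f k * B $$ (k,l) * cnj (f l)"
proof -
  assume a: "B \<in> carrier_mat N N" "k < N" "l < N"
  then have "(dg N f * B * adj (dg N f)) $$ (k,l) = (dg N f * B) $$ (k,l) * cnj (f l)"
    unfolding adj_dg by (intro dg_mult_right) auto
  then show ?thesis using a by (simp add: dg_mult_left del: index_mult_mat)
qed

lemma comm_dg: "B \<in> carrier_mat N N \<Longrightarrow> k < N \<Longrightarrow> l < N \<Longrightarrow>
  (dg N f * B - B * dg N f) $$ (k,l) = (f k - f l) * B $$ (k,l)"
proof -
  assume a: "B \<in> carrier_mat N N" "k < N" "l < N"
  then have "(dg N f * B - B * dg N f) $$ (k,l) = (dg N f * B) $$ (k,l) - (B * dg N f) $$ (k,l)"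
    by auto
  then show ?thesis using a by (simp add: dg_mult_left dg_mult_right algebra_simps del: index_mult_mat)
qed

lemma ent_cis: "ent (map (\<lambda>a. (cis a, cis (- a))) as) k = cis (phase as k)"
  by (induction as arbitrary: k) (auto simp: cis_mult)

lemma phase_scale: "phase (map (\<lambda>x. t * x) as) k = t * phase as k"
  by (induction as arbitrary: k) (auto simp: algebra_simps)

lemma phase_diff: "length as = length bs \<Longrightarrow> phase (map2 (-) as bs) k = phase as k - phase bs k"
proof (induction as arbitrary: bs k)
  case Nil then show ?case by simp
next
  case (Cons a as)
  then obtain b bs' where bs: "bs = b # bs'" "length as = length bs'" by (cases bs) auto
  then show ?case using Cons.IH[OF bs(2)] by simp
qed

lemma phase_bound: "\<forall>a\<in>set as. \<bar>a\<bar> \<le> pi \<Longrightarrow> \<bar>phase as k\<bar> \<le> length as * pi"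
proof (induction as arbitrary: k)
  case Nil then show ?case by simp
next
  case (Cons a as)
  have "\<bar>phase as (k mod 2 ^ length as)\<bar> \<le> length as * pi" using Cons by auto
  moreover have "\<bar>a\<bar> \<le> pi" using Cons by auto
  ultimately show ?case by (auto simp: algebra_simps)
qed

lemma ent_ones: "ent (replicate m (1,1)) k = 1"
  by (induction m arbitrary: k) auto

lemma ent_upd_sum: "(\<Sum>j<length as. ent ((replicate (length as) (1,1))[j := (\<i> * of_real (as!j), - \<i> * of_real (as!j))]) k)
   = \<i> * of_real (phase as k)"
proof (induction as arbitrary: k)
  case Nil then show ?case by simp
next
  case (Cons a as)
  define m where "m = length as"
  have "(\<Sum>j<length (a#as). ent ((replicate (length (a#as)) (1,1))[j := (\<i> * of_real ((a#as)!j), - \<i> * of_real ((a#as)!j))]) k)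
     = ent ((\<i> * of_real a, - \<i> * of_real a) # replicate m (1,1)) k
       + (\<Sum>j<m. ent ((1,1) # (replicate m (1,1))[j := (\<i> * of_real (as!j), - \<i> * of_real (as!j))]) k)"
    unfolding length_Cons sum.lessThan_Suc_shift by (simp add: m_def del: ent.simps)
  also have "\<dots> = (if k div 2^m = 0 then \<i> * of_real a else - \<i> * of_real a)
       + (\<Sum>j<m. ent ((replicate m (1,1))[j := (\<i> * of_real (as!j), - \<i> * of_real (as!j))]) (k mod 2^m))"
    by (simp add: ent_ones)
  also have "\<dots> = (if k div 2^m = 0 then \<i> * of_real a else - \<i> * of_real a) + \<i> * of_real (phase as (k mod 2^m))"
    using Cons.IH unfolding m_def by simp
  also have "\<dots> = \<i> * of_real (phase (a#as) k)" by (simp add: m_def algebra_simps)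
  finally show ?case .
qed



lemma dmat_cis_SU2: "dmat (cis a, cis (- a)) \<in> SU2"
proof -
  have "dmat (cis a, cis (- a)) = su (cis a) 0" by (simp add: dmat_def su_def cis_cnj)
  moreover have "cis a * cnj (cis a) + 0 * cnj 0 = 1" by (simp add: cis_cnj cis_mult)
  ultimately show ?thesis using su_in_SU2 by metis
qed

lemma diag_su2_dmat: "diag_su2 l = dmat (\<i> * of_real l, - \<i> * of_real l)"
  by (rule m2_eqI) (auto simp: diag_su2_def dmat_def)

lemma one_dmat: "1\<^sub>m 2 = dmat (1, 1)"
  by (simp add: dmat_def m2_one)

lemma local_diag_dg: "local_diag n j l = dg (2^n) (ent ((replicate n (1,1))[j := (\<i> * of_real l, - \<i> * of_real l)]))"
proof -
  have "(replicate n (1\<^sub>m 2))[j := diag_su2 l] = map dmat ((replicate n (1,1))[j := (\<i> * of_real l, - \<i> * of_real l)])"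
    by (simp add: diag_su2_dmat one_dmat map_update)
  then show ?thesis unfolding local_diag_def by (simp add: tensor_dmat)
qed

lemma foldr_dg: "foldr (+) (map (\<lambda>j. dg N (g j)) js) (0\<^sub>m N N) = dg N (\<lambda>k. \<Sum>j\<leftarrow>js. g j k)"
proof (induction js)
  case Nil show ?case by (rule eq_matI) (auto simp: dg_index)
next
  case (Cons j js)
  show ?case using Cons by simp (rule eq_matI, auto simp: dg_index)
qed

lemma t_loc_elem: "foldr (+) (map (\<lambda>j. local_diag n j (lam j)) [0..<n]) (0\<^sub>m (2^n) (2^n))
   = dg (2^n) (\<lambda>k. \<i> * of_real (phase (map lam [0..<n]) k))"
proof -
  let ?as = "map lam [0..<n]"
  have "foldr (+) (map (\<lambda>j. local_diag n j (lam j)) [0..<n]) (0\<^sub>m (2^n) (2^n))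
     = dg (2^n) (\<lambda>k. \<Sum>j\<leftarrow>[0..<n]. ent ((replicate n (1,1))[j := (\<i> * of_real (lam j), - \<i> * of_real (lam j))]) k)"
    unfolding local_diag_dg by (rule foldr_dg)
  also have "\<dots> = dg (2^n) (\<lambda>k. \<i> * of_real (phase ?as k))"
  proof -
    have "(\<Sum>j\<leftarrow>[0..<n]. ent ((replicate n (1,1))[j := (\<i> * of_real (lam j), - \<i> * of_real (lam j))]) k)
       = \<i> * of_real (phase ?as k)" for k
    proof -
      have "(\<Sum>j\<leftarrow>[0..<n]. ent ((replicate n (1,1))[j := (\<i> * of_real (lam j), - \<i> * of_real (lam j))]) k)
        = (\<Sum>j<length ?as. ent ((replicate (length ?as) (1,1))[j := (\<i> * of_real (?as!j), - \<i> * of_real (?as!j))]) k)"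
        by (simp flip: sum_set_upt_conv_sum_list_nat add: atLeast0LessThan)
      then show ?thesis using ent_upd_sum[of ?as k] by simp
    qed
    then show ?thesis by simp
  qed
  finally show ?thesis .
qed

lemma t_loc_mem: "dg (2^n) (\<lambda>k. \<i> * of_real (phase (map lam [0..<n]) k)) \<in> t_loc n"
  unfolding t_loc_def by (rule CollectI, rule exI[of _ lam]) (simp add: t_loc_elem)

lemma t_loc_dg: "\<Delta> \<in> t_loc n \<Longrightarrow> \<exists>lam. \<Delta> = dg (2^n) (\<lambda>k. \<i> * of_real (phase (map lam [0..<n]) k))"
  unfolding t_loc_def using t_loc_elem by blast

definition E_of :: "real list \<Rightarrow> complex mat" where
  "E_of as = tensor_list (map dmat (map (\<lambda>a. (cis a, cis (- a))) as))"

lemma E_of_dg: "E_of as = dg (2^length as) (\<lambda>k. cis (phase as k))"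
proof -
  have "ent (map (\<lambda>a. (cis a, cis (- a))) as) = (\<lambda>k. cis (phase as k))" by (rule ext) (rule ent_cis)
  then show ?thesis unfolding E_of_def tensor_dmat by simp
qed

lemma E_of_SU_loc: "E_of as \<in> SU_loc (length as)"
  unfolding E_of_def SU_loc_def
  by (rule CollectI, rule exI[of _ "map dmat (map (\<lambda>a. (cis a, cis (- a))) as)"]) (auto simp: dmat_cis_SU2)

definition cj :: "complex mat \<Rightarrow> complex mat \<Rightarrow> complex mat" where
  "cj P M = P * M * adj P"

lemma cj_carrier: "P \<in> carrier_mat N N \<Longrightarrow> M \<in> carrier_mat N N \<Longrightarrow> cj P M \<in> carrier_mat N N"
  unfolding cj_def by (metis adj_carrier mult_carrier_mat)

lemma cj_mult: "P \<in> carrier_mat N N \<Longrightarrow> Q \<in> carrier_mat N N \<Longrightarrow> M \<in> carrier_mat N N \<Longrightarrow>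
  cj (P * Q) M = cj P (cj Q M)"
proof -
  assume P: "P \<in> carrier_mat N N" and Q: "Q \<in> carrier_mat N N" and M: "M \<in> carrier_mat N N"
  have aP: "adj P \<in> carrier_mat N N" and aQ: "adj Q \<in> carrier_mat N N" using P Q by (auto intro: adj_carrier)
  have as: "\<And>X Y Z. X \<in> carrier_mat N N \<Longrightarrow> Y \<in> carrier_mat N N \<Longrightarrow> Z \<in> carrier_mat N N \<Longrightarrow> X * Y * Z = X * (Y * Z)"
    by auto
  have "cj (P * Q) M = P * Q * M * (adj Q * adj P)" unfolding cj_def using P Q by (simp add: adj_mult)
  also have "\<dots> = P * (Q * M) * (adj Q * adj P)" using P Q M by (simp add: as)
  also have "\<dots> = P * ((Q * M) * (adj Q * adj P))" using P Q M aP aQ by (intro as) auto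
  also have "(Q * M) * (adj Q * adj P) = (Q * M * adj Q) * adj P" using P Q M aP aQ by (intro as[symmetric]) auto
  also have "P * (Q * M * adj Q * adj P) = P * (Q * M * adj Q) * adj P" using P Q M aP aQ by (intro as[symmetric]) auto
  finally show ?thesis unfolding cj_def .
qed

lemma cj_unitary: "P \<in> carrier_mat N N \<Longrightarrow> M \<in> carrier_mat N N \<Longrightarrow> adj P * P = 1\<^sub>m N \<Longrightarrow>
  cj (adj P) (cj P M) = M"
proof -
  assume P: "P \<in> carrier_mat N N" and M: "M \<in> carrier_mat N N" and u: "adj P * P = 1\<^sub>m N"
  have aP: "adj P \<in> carrier_mat N N" using P by (rule adj_carrier)
  have "cj (adj P) (cj P M) = (adj P * P) * M * (adj P * P)"
    unfolding cj_def adj_adj using P M aP by (simp add: assoc_mult_mat[of _ N N _ N _ N])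
  then show ?thesis using u M by simp
qed

lemma cj_smult: "P \<in> carrier_mat N N \<Longrightarrow> M \<in> carrier_mat N N \<Longrightarrow> cj P (c \<cdot>\<^sub>m M) = c \<cdot>\<^sub>m cj P M"
  unfolding cj_def
  by (metis adj_carrier mult_carrier_mat mult_smult_assoc_mat mult_smult_distrib)

lemma mtrace_smult: "C \<in> carrier_mat N N \<Longrightarrow> M \<in> carrier_mat N N \<Longrightarrow>
  mtrace (adj C * (c \<cdot>\<^sub>m M)) = c * mtrace (adj C * M)"
proof -
  assume C: "C \<in> carrier_mat N N" and M: "M \<in> carrier_mat N N"
  have "adj C * (c \<cdot>\<^sub>m M) = c \<cdot>\<^sub>m (adj C * M)" using C M by (metis adj_carrier mult_smult_distrib)
  then show ?thesis using C M by (simp add: mtrace_def sum_distrib_left)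
qed



lemma W_loc_cj: "W_loc n C A = {mtrace (adj C * cj U A) | U. U \<in> SU_loc n}"
  by (simp add: W_loc_def cj_def)

lemma rot_from_gen:
  assumes A: "A \<in> carrier_mat (2^n) (2^n)" and C: "C \<in> carrier_mat (2^n) (2^n)"
    and G: "\<And>\<psi>::real. \<exists>G \<in> SU_loc n. cj G A = cis \<psi> \<cdot>\<^sub>m A"
  shows "rot_symmetric (W_loc n C A)"
proof -
  have sub: "cis \<psi> * z \<in> W_loc n C A" if z: "z \<in> W_loc n C A" for \<psi> z
  proof -
    obtain X where X: "X \<in> SU_loc n" "z = mtrace (adj C * cj X A)" using z unfolding W_loc_cj by blast
    obtain Gm where Gm: "Gm \<in> SU_loc n" "cj Gm A = cis \<psi> \<cdot>\<^sub>m A" using G by blast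
    have Xc: "X \<in> carrier_mat (2^n) (2^n)" and Gc: "Gm \<in> carrier_mat (2^n) (2^n)"
      using X Gm SU_loc_carrier by auto
    have "cj (X * Gm) A = cj X (cis \<psi> \<cdot>\<^sub>m A)" using Xc Gc A Gm by (simp add: cj_mult)
    also have "\<dots> = cis \<psi> \<cdot>\<^sub>m cj X A" using Xc A by (simp add: cj_smult)
    finally have "mtrace (adj C * cj (X * Gm) A) = cis \<psi> * z"
      using X C Xc A by (simp add: mtrace_smult cj_carrier)
    moreover have "X * Gm \<in> SU_loc n" using X Gm SU_loc_mult by auto
    ultimately show ?thesis unfolding W_loc_cj by force
  qed
  show ?thesis unfolding rot_symmetric_def
  proof
    fix \<phi> :: real
    show "(\<lambda>z. cis \<phi> * z) ` W_loc n C A = W_loc n C A"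
    proof
      show "(\<lambda>z. cis \<phi> * z) ` W_loc n C A \<subseteq> W_loc n C A" using sub by auto
      show "W_loc n C A \<subseteq> (\<lambda>z. cis \<phi> * z) ` W_loc n C A"
      proof
        fix w assume w: "w \<in> W_loc n C A"
        have "w = cis \<phi> * (cis (- \<phi>) * w)" by (simp add: cis_mult)
        moreover have "cis (- \<phi>) * w \<in> W_loc n C A" using sub[OF w] .
        ultimately show "w \<in> (\<lambda>z. cis \<phi> * z) ` W_loc n C A" by blast
      qed
    qed
  qed
qed

lemma easy_dir:
  assumes A: "A \<in> carrier_mat (2^n) (2^n)" and U: "U \<in> SU_loc n" and D: "\<Delta> \<in> t_loc n" and ph: "\<phi> \<noteq> 0"
    and comm: "\<Delta> * (U * A * adj U) - (U * A * adj U) * \<Delta> = (\<i> * of_real \<phi>) \<cdot>\<^sub>m (U * A * adj U)"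
  shows "\<forall>C \<in> carrier_mat (2^n) (2^n). rot_symmetric (W_loc n C A)"
proof
  fix C :: "complex mat" assume C: "C \<in> carrier_mat (2^n) (2^n)"
  define N where "N = (2::nat)^n"
  obtain lam where Dl: "\<Delta> = dg N (\<lambda>k. \<i> * of_real (phase (map lam [0..<n]) k))"
    using t_loc_dg[OF D] unfolding N_def by blast
  define s where "s k = phase (map lam [0..<n]) k" for k
  define B where "B = cj U A"
  have Uc: "U \<in> carrier_mat N N" using U SU_loc_carrier N_def by auto
  have Ac: "A \<in> carrier_mat N N" using A N_def by auto
  have Bc: "B \<in> carrier_mat N N" unfolding B_def using Uc Ac by (rule cj_carrier)
  have key: "s k - s l = \<phi>" if k: "k < N" and l: "l < N" and nz: "B $$ (k,l) \<noteq> 0" for k l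
  proof -
    have "(\<Delta> * B - B * \<Delta>) $$ (k,l) = ((\<i> * of_real \<phi>) \<cdot>\<^sub>m B) $$ (k,l)"
      using comm unfolding B_def cj_def by simp
    moreover have "(\<Delta> * B - B * \<Delta>) $$ (k,l) = (\<i> * of_real (s k) - \<i> * of_real (s l)) * B $$ (k,l)"
      unfolding Dl s_def by (rule comm_dg[OF Bc k l])
    ultimately have "(\<i> * of_real (s k) - \<i> * of_real (s l)) * B $$ (k,l) = (\<i> * of_real \<phi>) * B $$ (k,l)"
      using Bc k l by simp
    then have "\<i> * of_real (s k) - \<i> * of_real (s l) = \<i> * of_real \<phi>" using nz by simp
    then have "\<i> * complex_of_real (s k - s l) = \<i> * of_real \<phi>" by (simp add: right_diff_distrib)
    then have "complex_of_real (s k - s l) = of_real \<phi>" by (metis mult_cancel_left complex_i_not_zero)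
    then show ?thesis using of_real_eq_iff by blast
  qed
  have gen: "\<exists>G \<in> SU_loc n. cj G A = cis \<psi> \<cdot>\<^sub>m A" for \<psi> :: real
  proof -
    define t where "t = \<psi> / \<phi>"
    define E where "E = E_of (map (\<lambda>x. t * x) (map lam [0..<n]))"
    have Edg: "E = dg N (\<lambda>k. cis (t * s k))"
      unfolding E_def E_of_dg s_def N_def using phase_scale[of t "map lam [0..<n]"] by simp
    have ESU: "E \<in> SU_loc n" unfolding E_def using E_of_SU_loc by (metis length_map length_upt diff_zero)
    have Ec: "E \<in> carrier_mat N N" unfolding Edg by simp
    have EB: "cj E B = cis \<psi> \<cdot>\<^sub>m B"
    proof (rule eq_matI)
      fix k l assume "k < dim_row (cis \<psi> \<cdot>\<^sub>m B)" "l < dim_col (cis \<psi> \<cdot>\<^sub>m B)"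
      then have k: "k < N" and l: "l < N" using Bc by auto
      have "cj E B $$ (k,l) = cis (t * s k) * B $$ (k,l) * cnj (cis (t * s l))"
        unfolding cj_def Edg using Bc k l by (rule conj_dg)
      also have "\<dots> = cis (t * (s k - s l)) * B $$ (k,l)"
        by (simp add: cis_cnj cis_mult algebra_simps)
      also have "\<dots> = cis \<psi> * B $$ (k,l)"
        using key[OF k l] ph by (cases "B $$ (k,l) = 0") (auto simp: t_def)
      finally show "cj E B $$ (k,l) = (cis \<psi> \<cdot>\<^sub>m B) $$ (k,l)" using k l Bc by simp
    qed (use Bc Ec in \<open>auto simp: cj_def\<close>)
    define G where "G = adj U * (E * U)"
    have aUc: "adj U \<in> carrier_mat N N" using Uc by (rule adj_carrier)
    have "cj G A = cj (adj U) (cj E (cj U A))"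
      unfolding G_def using Uc aUc Ec Ac by (simp add: cj_mult)
    also have "\<dots> = cis \<psi> \<cdot>\<^sub>m cj (adj U) (cj U A)"
      using EB aUc Ac Uc unfolding B_def by (simp add: cj_smult cj_carrier)
    also have "cj (adj U) (cj U A) = A"
      using Uc Ac SU_loc_unitary(1)[OF U] unfolding N_def by (intro cj_unitary) (auto simp: N_def)
    finally have "cj G A = cis \<psi> \<cdot>\<^sub>m A" .
    moreover have "G \<in> SU_loc n" unfolding G_def using U ESU by (intro SU_loc_mult SU_loc_adj)
    ultimately show ?thesis by blast
  qed
  show "rot_symmetric (W_loc n C A)" using A C gen by (rule rot_from_gen)
qed



lemma mtrace_adj_mult: "M \<in> carrier_mat N N \<Longrightarrow> K \<in> carrier_mat N N \<Longrightarrow>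
  mtrace (adj M * K) = (\<Sum>i<N. \<Sum>k<N. cnj (M $$ (k,i)) * K $$ (k,i))"
proof -
  assume M: "M \<in> carrier_mat N N" and K: "K \<in> carrier_mat N N"
  have "mtrace (adj M * K) = (\<Sum>i<N. (adj M * K) $$ (i,i))" unfolding mtrace_def using M by simp
  also have "\<dots> = (\<Sum>i<N. \<Sum>k<N. cnj (M $$ (k,i)) * K $$ (k,i))"
  proof (rule sum.cong[OF refl])
    fix i assume "i \<in> {..<N}"
    then show "(adj M * K) $$ (i,i) = (\<Sum>k<N. cnj (M $$ (k,i)) * K $$ (k,i))"
      using M K by (subst mult_entry) auto
  qed
  finally show ?thesis .
qed

lemma mtrace_swap_cnj: "M \<in> carrier_mat N N \<Longrightarrow> K \<in> carrier_mat N N \<Longrightarrow>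
  mtrace (adj K * M) = cnj (mtrace (adj M * K))"
  by (simp add: mtrace_adj_mult mult.commute)

lemma mtrace_zero: assumes M: "M \<in> carrier_mat N N" and z: "mtrace (adj M * M) = 0"
  shows "M = 0\<^sub>m N N"
proof -
  have cz: "cnj z * z = complex_of_real ((cmod z)^2)" for z by (metis complex_norm_square mult.commute)
  have "mtrace (adj M * M) = of_real (\<Sum>i<N. \<Sum>k<N. (cmod (M $$ (k,i)))^2)"
    using M by (simp only: mtrace_adj_mult cz of_real_sum)
  then have "complex_of_real (\<Sum>i<N. \<Sum>k<N. (cmod (M $$ (k,i)))^2) = 0" using z by simp
  then have "(\<Sum>i<N. \<Sum>k<N. (cmod (M $$ (k,i)))^2) = 0" by (simp only: of_real_eq_0_iff)
  then have "\<forall>i\<in>{..<N}. (\<Sum>k<N. (cmod (M $$ (k,i)))^2) = 0"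
    by (subst (asm) sum_nonneg_eq_0_iff) (auto intro: sum_nonneg)
  then have "\<forall>i<N. \<forall>k<N. (cmod (M $$ (k,i)))^2 = 0"
    by (auto simp: sum_nonneg_eq_0_iff)
  then show ?thesis using M by (intro eq_matI) auto
qed

lemma mtrace_diff_expand: assumes X: "X \<in> carrier_mat N N" and C: "C \<in> carrier_mat N N"
  shows "mtrace (adj (X - C) * (X - C)) = mtrace (adj X * X) - mtrace (adj X * C) - mtrace (adj C * X) + mtrace (adj C * C)"
proof -
  have D: "X - C \<in> carrier_mat N N" by (rule carrier_matI) (use X C in auto)
  have "mtrace (adj (X - C) * (X - C)) = (\<Sum>i<N. \<Sum>k<N. cnj ((X - C) $$ (k,i)) * (X - C) $$ (k,i))"
    by (rule mtrace_adj_mult[OF D D])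
  also have "\<dots> = (\<Sum>i<N. \<Sum>k<N. cnj (X $$ (k,i)) * X $$ (k,i) - cnj (X $$ (k,i)) * C $$ (k,i)
       - cnj (C $$ (k,i)) * X $$ (k,i) + cnj (C $$ (k,i)) * C $$ (k,i))"
    using X C by (intro sum.cong refl) (auto simp: algebra_simps)
  also have "\<dots> = mtrace (adj X * X) - mtrace (adj X * C) - mtrace (adj C * X) + mtrace (adj C * C)"
    using X C by (simp add: mtrace_adj_mult sum.distrib sum_subtractf)
  finally show ?thesis .
qed

lemma mtrace_cyc: "P \<in> carrier_mat N N \<Longrightarrow> Q \<in> carrier_mat N N \<Longrightarrow> mtrace (P * Q) = mtrace (Q * P)"
proof -
  assume P: "P \<in> carrier_mat N N" and Q: "Q \<in> carrier_mat N N"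
  have dP: "dim_row (P*Q) = N" "dim_row (Q*P) = N" using P Q by auto
  have "mtrace (P * Q) = (\<Sum>i<N. \<Sum>k<N. P $$ (i,k) * Q $$ (k,i))"
    unfolding mtrace_def dP using P Q by (intro sum.cong refl) (subst mult_entry, auto)
  also have "\<dots> = (\<Sum>k<N. \<Sum>i<N. Q $$ (k,i) * P $$ (i,k))"
    by (subst sum.swap) (simp add: mult.commute)
  also have "\<dots> = mtrace (Q * P)"
    unfolding mtrace_def dP using P Q by (intro sum.cong refl) (subst mult_entry, auto)
  finally show ?thesis .
qed

lemma adj_smult: "adj (c \<cdot>\<^sub>m M) = cnj c \<cdot>\<^sub>m adj M"
  by (rule eq_matI) auto

lemma norm_cj: assumes U: "U \<in> carrier_mat N N" "adj U * U = 1\<^sub>m N" and A: "A \<in> carrier_mat N N"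
  shows "mtrace (adj (cj U A) * cj U A) = mtrace (adj A * A)"
proof -
  have aU: "adj U \<in> carrier_mat N N" and aA: "adj A \<in> carrier_mat N N" using U A by (auto intro: adj_carrier)
  have as: "\<And>X Y Z. X \<in> carrier_mat N N \<Longrightarrow> Y \<in> carrier_mat N N \<Longrightarrow> Z \<in> carrier_mat N N \<Longrightarrow> X * Y * Z = X * (Y * Z)"
    by auto
  have "adj (cj U A) = U * adj A * adj U" unfolding cj_def
    using U A aU aA by (simp add: adj_mult[of _ N N _ N] as)
  moreover have canc: "adj U * (U * (A * adj U)) = A * adj U"
  proof -
    have "(adj U * U) * (A * adj U) = adj U * (U * (A * adj U))" using U A aU by (intro as) auto
    then show ?thesis using U A aU by simp
  qed
  ultimately have "adj (cj U A) * cj U A = U * (adj A * A * adj U)"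
    unfolding cj_def using U A aU aA by (simp add: as)
  then have "mtrace (adj (cj U A) * cj U A) = mtrace ((adj A * A * adj U) * U)"
    using U A aU aA by (simp add: mtrace_cyc[of U N])
  also have "\<dots> = mtrace (adj A * A)" using U A aU aA by (simp add: as)
  finally show ?thesis .
qed

lemma orbit_rot:
  assumes A: "A \<in> carrier_mat (2^n) (2^n)"
    and rs: "\<forall>C \<in> carrier_mat (2^n) (2^n). rot_symmetric (W_loc n C A)"
  shows "\<exists>U \<in> SU_loc n. cj U A = cis \<theta> \<cdot>\<^sub>m A"
proof -
  define N where "N = (2::nat)^n"
  have Ac: "A \<in> carrier_mat N N" using A N_def by simp
  have aA: "adj A \<in> carrier_mat N N" using Ac by (rule adj_carrier)
  define C where "C = cis \<theta> \<cdot>\<^sub>m A"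
  have Cc: "C \<in> carrier_mat N N" using Ac C_def by simp
  define nA where "nA = mtrace (adj A * A)"
  have adjC: "adj C = cis (- \<theta>) \<cdot>\<^sub>m adj A" unfolding C_def adj_smult by (simp add: cis_cnj)
  have one: "1\<^sub>m N \<in> SU_loc n" unfolding N_def by (rule SU_loc_one)
  have cjone: "cj (1\<^sub>m N) A = A"
  proof -
    have "adj (1\<^sub>m N) = 1\<^sub>m N" by (rule eq_matI) auto
    then show ?thesis unfolding cj_def using Ac by simp
  qed
  have hCA: "mtrace (adj C * A) = cis (- \<theta>) * nA"
    unfolding adjC nA_def using aA Ac by (simp add: mult_smult_assoc_mat mtrace_def sum_distrib_left)
  then have "cis (- \<theta>) * nA \<in> W_loc n C A" unfolding W_loc_cj using one cjone by force
  then have mem: "cis \<theta> * (cis (- \<theta>) * nA) \<in> W_loc n C A"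
    using rs Cc N_def unfolding rot_symmetric_def by blast
  have eqn: "cis \<theta> * (cis (- \<theta>) * nA) = nA"
  proof -
    have "cis \<theta> * (cis (- \<theta>) * nA) = (cis \<theta> * cis (- \<theta>)) * nA" by (simp only: mult.assoc)
    then show ?thesis by (simp add: cis_mult)
  qed
  have "nA \<in> W_loc n C A" using mem unfolding eqn .
  then obtain U where U: "U \<in> SU_loc n" "mtrace (adj C * cj U A) = nA" unfolding W_loc_cj by auto
  define X where "X = cj U A"
  have Uc: "U \<in> carrier_mat N N" using U SU_loc_carrier N_def by auto
  have Xc: "X \<in> carrier_mat N N" unfolding X_def using Uc Ac by (rule cj_carrier)
  have nAr: "cnj nA = nA" unfolding nA_def using mtrace_swap_cnj[OF Ac Ac] by simp
  have Uu: "adj U * U = 1\<^sub>m N" using SU_loc_unitary(1)[OF U(1)] unfolding N_def .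
  have e1: "mtrace (adj X * X) = nA" unfolding X_def nA_def by (rule norm_cj[OF Uc Uu Ac])
  have e2: "mtrace (adj C * X) = nA" using U X_def by simp
  have e3: "mtrace (adj X * C) = nA" using mtrace_swap_cnj[OF Xc Cc] e2 nAr by simp
  have e4: "mtrace (adj C * C) = nA"
  proof -
    have "mtrace (adj C * (cis \<theta> \<cdot>\<^sub>m A)) = cis \<theta> * mtrace (adj C * A)"
      by (rule mtrace_smult[OF Cc Ac])
    then have "mtrace (adj C * C) = cis \<theta> * mtrace (adj C * A)"
      by (simp only: C_def[symmetric])
    also have "\<dots> = (cis \<theta> * cis (- \<theta>)) * nA" unfolding hCA by (simp only: mult.assoc)
    also have "cis \<theta> * cis (- \<theta>) = 1" by (simp add: cis_mult)
    finally show ?thesis by simp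
  qed
  have "mtrace (adj (X - C) * (X - C)) = 0" using mtrace_diff_expand[OF Xc Cc] e1 e2 e3 e4 by simp
  then have "X - C = 0\<^sub>m N N" using Xc Cc by (intro mtrace_zero) auto
  then have z: "\<And>i j. i < N \<Longrightarrow> j < N \<Longrightarrow> (X - C) $$ (i,j) = 0" by simp
  have "X = C"
  proof (rule eq_matI)
    fix i j assume "i < dim_row C" "j < dim_col C"
    then have i: "i < N" and j: "j < N" using Cc by auto
    have "(X - C) $$ (i,j) = X $$ (i,j) - C $$ (i,j)" using i j Cc by simp
    then show "X $$ (i,j) = C $$ (i,j)" using z[OF i j] by simp
  qed (use Xc Cc in auto)
  then show ?thesis using U X_def C_def by blast
qed



lemma su_eq_iff: "su a b = su c d \<longleftrightarrow> a = c \<and> b = d"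
  by (auto simp: su_def m2_eq_iff)

lemma dmat_su: "dmat (z, cnj z) = su z 0" by (simp add: dmat_def su_def)

lemma diag_core:
  fixes a b z v1 v2 R :: complex
  assumes e1: "a*v1 - cnj b*v2 = z*v1" and e2: "b*v1 + cnj a*v2 = z*v2"
    and n: "v1*cnj v1 + v2*cnj v2 = R*R" and R: "R \<noteq> 0" and Rr: "cnj R = R"
  shows "su (cnj v1/R) (-v2/R) * su a b * adj (su (cnj v1/R) (-v2/R)) = su z 0"
proof -
  define p y where "p = cnj v1/R" and "y = -v2/R"
  define P Q where "P = p*a - cnj y * b" and "Q = y*a + cnj p * b"
  have cp: "cnj p = v1/R" and cy: "cnj y = - cnj v2/R" unfolding p_def y_def using Rr by simp_all
  have "su p y * su a b * adj (su p y) = su (P * cnj p + cnj Q * y) (Q * cnj p - cnj P * y)"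
    unfolding su_adj su_mult P_def Q_def by (simp add: algebra_simps)
  moreover have "P * cnj p + cnj Q * y = z"
  proof -
    have "P * cnj p + cnj Q * y = (cnj v1 * (a*v1 - cnj b*v2) + cnj v2 * (b*v1 + cnj a*v2)) / (R*R)"
      unfolding P_def Q_def cp cy using Rr R unfolding p_def y_def by (simp add: field_simps)
    also have "\<dots> = z * (v1*cnj v1 + v2*cnj v2) / (R*R)" unfolding e1 e2 by (simp add: algebra_simps)
    also have "\<dots> = z" using n R by simp
    finally show ?thesis .
  qed
  moreover have "Q * cnj p - cnj P * y = 0"
  proof -
    have "Q * cnj p - cnj P * y = (v1 * (b*v1 + cnj a*v2) - v2 * (a*v1 - cnj b*v2)) / (R*R)"
      unfolding P_def Q_def cp cy using Rr R unfolding p_def y_def by (simp add: field_simps)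
    also have "\<dots> = 0" unfolding e1 e2 by simp
    finally show ?thesis .
  qed
  ultimately show ?thesis unfolding p_def y_def by simp
qed

lemma cnj_sq: "z * cnj z = complex_of_real ((cmod z)^2)" using complex_norm_square[of z] by simp

lemma diag_SU2_pre: assumes "U \<in> SU2"
  shows "\<exists>V \<in> SU2. \<exists>z. V * U * adj V = su z 0 \<and> z * cnj z = 1"
proof -
  obtain a b where U: "U = su a b" and na: "a * cnj a + b * cnj b = 1" using SU2_su[OF assms] by metis
  show ?thesis
  proof (cases "b = 0")
    case True
    have "su 1 0 * U * adj (su 1 0) = su a 0" unfolding U True su_adj su_mult by simp
    moreover have "su 1 0 \<in> SU2" by (rule su_in_SU2) simp
    moreover have "a * cnj a = 1" using na True by simp
    ultimately show ?thesis by blast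
  next
    case False
    define x where "x = Re a"
    have nr: "(cmod a)^2 + (cmod b)^2 = 1"
    proof -
      have "complex_of_real ((cmod a)^2 + (cmod b)^2) = 1" using na by (simp add: cnj_sq)
      then show ?thesis by (metis of_real_eq_1_iff)
    qed
    have x1: "x^2 \<le> 1" using nr unfolding x_def cmod_power2
      by (smt (verit) zero_le_power2)
    define s where "s = sqrt (1 - x^2)"
    have s2: "s * s = 1 - x * x" unfolding s_def using x1 by (simp add: power2_eq_square)
    define z where "z = Complex x s"
    have zc: "z * cnj z = 1" unfolding z_def using s2 by (simp add: complex_eq_iff)
    have acnj: "a + cnj a = Complex (2*x) 0" unfolding x_def by (simp add: complex_eq_iff)
    have zq: "z*z - (a + cnj a)*z + 1 = 0" unfolding acnj z_def using s2 by (simp add: complex_eq_iff algebra_simps)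
    define v1 where "v1 = z - cnj a"
    define v2 where "v2 = b"
    have e1: "a*v1 - cnj b*v2 = z*v1"
    proof -
      have "a*v1 - cnj b*v2 - z*v1 = -(z*z - (a + cnj a)*z + 1) + (1 - (a * cnj a + b * cnj b))"
        unfolding v1_def v2_def by (simp add: algebra_simps)
      then have "a*v1 - cnj b*v2 - z*v1 = 0" using zq na by simp
      then show ?thesis by simp
    qed
    have e2: "b*v1 + cnj a*v2 = z*v2" unfolding v1_def v2_def by (simp add: algebra_simps)
    define r where "r = sqrt ((cmod v1)^2 + (cmod v2)^2)"
    have rpos: "r > 0" unfolding r_def v2_def using False
      by (simp add: add_nonneg_pos)
    define R where "R = complex_of_real r"
    have R: "R \<noteq> 0" using rpos R_def by simp
    have Rr: "cnj R = R" unfolding R_def by simp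
    have n: "v1*cnj v1 + v2*cnj v2 = R*R"
    proof -
      have "R * R = complex_of_real (r^2)" unfolding R_def by (simp add: power2_eq_square)
      also have "r^2 = (cmod v1)^2 + (cmod v2)^2" unfolding r_def by simp
      finally show ?thesis by (simp add: cnj_sq)
    qed
    have VU: "su (cnj v1/R) (-v2/R) * U * adj (su (cnj v1/R) (-v2/R)) = su z 0"
      unfolding U by (rule diag_core[OF e1 e2 n R Rr])
    have "(cnj v1/R) * cnj (cnj v1/R) + (-v2/R) * cnj (-v2/R) = (v1*cnj v1 + v2*cnj v2) / (R*R)"
      using Rr by (simp add: field_simps add_divide_distrib)
    then have "(cnj v1/R) * cnj (cnj v1/R) + (-v2/R) * cnj (-v2/R) = 1" using n R by simp
    then have "su (cnj v1/R) (-v2/R) \<in> SU2" by (rule su_in_SU2)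
    then show ?thesis using VU zc by blast
  qed
qed

lemma diag_SU2: assumes "U \<in> SU2"
  shows "\<exists>V \<in> SU2. \<exists>\<alpha>. \<bar>\<alpha>\<bar> \<le> pi \<and> V * U * adj V = dmat (cis \<alpha>, cis (- \<alpha>))"
proof -
  obtain V z where V: "V \<in> SU2" "V * U * adj V = su z 0" and zc: "z * cnj z = 1"
    using diag_SU2_pre[OF assms] by blast
  have "complex_of_real ((cmod z)^2) = 1" using zc by (simp add: cnj_sq)
  then have "(cmod z)^2 = 1" by (metis of_real_eq_1_iff)
  then have cz: "cmod z = 1" using norm_ge_zero[of z] by (auto simp: power2_eq_1_iff)
  then have z0: "z \<noteq> 0" by auto
  define \<alpha> where "\<alpha> = Arg z"
  have ca: "cis \<alpha> = z" unfolding \<alpha>_def using z0 cz by (simp add: cis_Arg sgn_div_norm)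
  have cb: "cis (- \<alpha>) = cnj z" using ca by (metis cis_cnj)
  have "\<bar>\<alpha>\<bar> \<le> pi" unfolding \<alpha>_def using Arg_bounded[of z] by auto
  moreover have "V * U * adj V = dmat (cis \<alpha>, cis (- \<alpha>))" unfolding ca cb dmat_su using V by simp
  ultimately show ?thesis using V by blast
qed



lemma map2_conj: "map2 (*) (map2 (*) (map g Us) Us) (map adj (map g Us)) = map (\<lambda>U. g U * U * adj (g U)) Us"
  by (induction Us) auto

lemma diag_loc: assumes "U \<in> SU_loc n"
  shows "\<exists>V \<in> SU_loc n. \<exists>as. length as = n \<and> (\<forall>a\<in>set as. \<bar>a\<bar> \<le> pi) \<and> cj V U = E_of as"
proof -
  obtain Us where U: "U = tensor_list Us" "length Us = n" "\<forall>U\<in>set Us. U \<in> SU2"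
    using assms unfolding SU_loc_def by blast
  have "\<forall>W\<in>set Us. \<exists>p. fst p \<in> SU2 \<and> \<bar>snd p\<bar> \<le> pi \<and> fst p * W * adj (fst p) = dmat (cis (snd p), cis (- snd p))"
    using U(3) diag_SU2 by fastforce
  then obtain f where f: "\<forall>W\<in>set Us. fst (f W) \<in> SU2 \<and> \<bar>snd (f W)\<bar> \<le> pi \<and>
      fst (f W) * W * adj (fst (f W)) = dmat (cis (snd (f W)), cis (- snd (f W)))"
    by metis
  define g where "g W = fst (f W)" for W
  define Vs where "Vs = map g Us"
  define as where "as = map (\<lambda>W. snd (f W)) Us"
  have Vs2: "\<forall>V\<in>set Vs. V \<in> SU2" using f unfolding Vs_def g_def by auto
  have Vc: "\<forall>V\<in>set Vs. V \<in> carrier_mat 2 2" using Vs2 SU2_carrier by auto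
  have Uc: "\<forall>V\<in>set Us. V \<in> carrier_mat 2 2" using U(3) SU2_carrier by auto
  have aVc: "\<forall>V\<in>set (map adj Vs). V \<in> carrier_mat 2 2" using Vc adj_carrier by auto
  have VUc: "\<forall>V\<in>set (map2 (*) Vs Us). V \<in> carrier_mat 2 2"
    using Vc Uc by (auto dest!: set_zip_leftD set_zip_rightD[of _ _ Vs] elim!: in_set_zipE)
  have len: "length Vs = length Us" unfolding Vs_def by simp
  have "cj (tensor_list Vs) U = tensor_list Vs * tensor_list Us * tensor_list (map adj Vs)"
    unfolding cj_def U(1) tensor_list_adj ..
  also have "\<dots> = tensor_list (map2 (*) Vs Us) * tensor_list (map adj Vs)"
    using len Vc Uc by (simp add: tensor_list_mult)
  also have "\<dots> = tensor_list (map2 (*) (map2 (*) Vs Us) (map adj Vs))"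
    using len VUc aVc by (intro tensor_list_mult) auto
  also have "map2 (*) (map2 (*) Vs Us) (map adj Vs) = map (\<lambda>W. g W * W * adj (g W)) Us"
    unfolding Vs_def by (rule map2_conj)
  also have "\<dots> = map dmat (map (\<lambda>a. (cis a, cis (- a))) as)"
    unfolding as_def g_def using f by auto
  finally have "cj (tensor_list Vs) U = E_of as" unfolding E_of_def .
  moreover have "tensor_list Vs \<in> SU_loc n" unfolding SU_loc_def using Vs2 len U(2) by auto
  moreover have "length as = n" "\<forall>a\<in>set as. \<bar>a\<bar> \<le> pi" unfolding as_def using U(2) f by auto
  ultimately show ?thesis by blast
qed

lemma hard_theta:
  assumes A: "A \<in> carrier_mat (2^n) (2^n)" and U: "U \<in> SU_loc n" and UA: "cj U A = cis \<theta> \<cdot>\<^sub>m A"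
  shows "\<exists>V \<in> SU_loc n. \<exists>as. length as = n \<and> (\<forall>a\<in>set as. \<bar>a\<bar> \<le> pi) \<and>
    (\<forall>k < 2^n. \<forall>l < 2^n. cis (phase as k) * cj V A $$ (k,l) * cnj (cis (phase as l)) = cis \<theta> * cj V A $$ (k,l))"
proof -
  define N where "N = (2::nat)^n"
  obtain V as where V: "V \<in> SU_loc n" "length as = n" "\<forall>a\<in>set as. \<bar>a\<bar> \<le> pi" "cj V U = E_of as"
    using diag_loc[OF U] by blast
  have Vc: "V \<in> carrier_mat N N" and Uc: "U \<in> carrier_mat N N" and Ac: "A \<in> carrier_mat N N"
    using V U A SU_loc_carrier N_def by auto
  have aVc: "adj V \<in> carrier_mat N N" using Vc by (rule adj_carrier)
  have VV: "adj V * V = 1\<^sub>m N" using SU_loc_unitary(1)[OF V(1)] unfolding N_def .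
  define B where "B = cj V A"
  have Bc: "B \<in> carrier_mat N N" unfolding B_def using Vc Ac by (rule cj_carrier)
  have "cj (cj V U) B = cj (V * U * adj V) B" unfolding cj_def ..
  also have "\<dots> = cj V (cj U (cj (adj V) B))"
    using Vc Uc aVc Bc by (simp add: cj_mult cj_carrier)
  also have "cj (adj V) B = A" unfolding B_def using Vc Ac VV by (rule cj_unitary)
  also have "cj V (cj U A) = cis \<theta> \<cdot>\<^sub>m B" unfolding UA B_def using Vc Ac by (rule cj_smult)
  finally have EB: "cj (E_of as) B = cis \<theta> \<cdot>\<^sub>m B" using V(4) by simp
  have "\<forall>k < N. \<forall>l < N. cis (phase as k) * B $$ (k,l) * cnj (cis (phase as l)) = cis \<theta> * B $$ (k,l)"
  proof (intro allI impI)
    fix k l assume k: "k < N" and l: "l < N"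
    have h1: "cj (E_of as) B $$ (k,l) = cis (phase as k) * B $$ (k,l) * cnj (cis (phase as l))"
      unfolding cj_def E_of_dg V(2) using Bc k l N_def by (intro conj_dg) auto
    then show "cis (phase as k) * B $$ (k,l) * cnj (cis (phase as l)) = cis \<theta> * B $$ (k,l)"
    proof -
      have h2: "cj (E_of as) B $$ (k,l) = cis \<theta> * B $$ (k,l)" using EB k l Bc by simp
      show ?thesis using h1 h2 by (metis mult.commute mult.left_commute)
    qed
  qed
  then show ?thesis using V unfolding B_def N_def by blast
qed



lemma cis_eq_1_int: assumes "cis x = 1" shows "\<exists>m::int. x = 2 * pi * m"
proof -
  have "cos x = 1" using assms by (metis cis.sel(1) one_complex.sel(1))
  then obtain m :: int where "x = real_of_int m * 2 * pi" using cos_one_2pi_int by blast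
  then show ?thesis by (intro exI[of _ m]) simp
qed

lemma int_bound: fixes m :: int assumes "\<bar>2 * pi * m\<bar> \<le> 2 * real n * pi + 1" shows "\<bar>m\<bar> \<le> int n + 1"
proof (rule ccontr)
  assume "\<not> \<bar>m\<bar> \<le> int n + 1"
  then have "real_of_int \<bar>m\<bar> \<ge> real n + 2" by linarith
  then have "2 * pi * \<bar>m\<bar> \<ge> 2 * pi * (real n + 2)" using pi_gt_zero by (intro mult_left_mono) auto
  moreover have "\<bar>2 * pi * m\<bar> = 2 * pi * \<bar>m\<bar>" using pi_gt_zero by (simp add: abs_mult)
  ultimately have "2 * pi * (real n + 2) \<le> 2 * real n * pi + 1" using assms by linarith
  then show False using pi_ge_two by (simp add: algebra_simps)
qed

lemma hard_dir:
  assumes A: "A \<in> carrier_mat (2^n) (2^n)"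
    and rs: "\<forall>C \<in> carrier_mat (2^n) (2^n). rot_symmetric (W_loc n C A)"
  shows "\<exists>U \<in> SU_loc n. \<exists>\<Delta> \<in> t_loc n. \<exists>\<phi>::real. \<phi> \<noteq> 0 \<and>
            \<Delta> * (U * A * adj U) - (U * A * adj U) * \<Delta> = (\<i> * of_real \<phi>) \<cdot>\<^sub>m (U * A * adj U)"
proof -
  define N where "N = (2::nat)^n"
  define Good where "Good \<theta> p \<longleftrightarrow> fst p \<in> SU_loc n \<and> length (snd p) = n \<and> (\<forall>a\<in>set (snd p). \<bar>a\<bar> \<le> pi) \<and>
    (\<forall>k < N. \<forall>l < N. cis (phase (snd p) k) * cj (fst p) A $$ (k,l) * cnj (cis (phase (snd p) l)) = cis \<theta> * cj (fst p) A $$ (k,l))"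
    for \<theta> :: real and p :: "complex mat \<times> real list"
  have "\<forall>\<theta>. \<exists>p. Good \<theta> p"
  proof
    fix \<theta> :: real
    obtain U where "U \<in> SU_loc n" "cj U A = cis \<theta> \<cdot>\<^sub>m A" using orbit_rot[OF A rs] by blast
    then obtain V as where "V \<in> SU_loc n" "length as = n" "\<forall>a\<in>set as. \<bar>a\<bar> \<le> pi"
      "\<forall>k < 2^n. \<forall>l < 2^n. cis (phase as k) * cj V A $$ (k,l) * cnj (cis (phase as l)) = cis \<theta> * cj V A $$ (k,l)"
      using hard_theta[OF A] by blast
    then have "Good \<theta> (V, as)" unfolding Good_def N_def by simp
    then show "\<exists>p. Good \<theta> p" by blast
  qed
  then obtain F where F: "\<And>\<theta>. Good \<theta> (F \<theta>)" by metis
  define Bm where "Bm \<theta> = cj (fst (F \<theta>)) A" for \<theta>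
  define ph where "ph \<theta> = phase (snd (F \<theta>))" for \<theta>
  define pat where "pat \<theta> = (\<lambda>(k,l). if k < N \<and> l < N \<and> Bm \<theta> $$ (k,l) \<noteq> 0
      then Some ((ph \<theta> k - ph \<theta> l - \<theta>) / (2 * pi)) else None)" for \<theta>
  define T where "T = range (\<lambda>m::nat. 1 / real (Suc m))"
  define R where "R = (real_of_int ` {- (int n + 1) .. int n + 1})"
  define S where "S = {f. \<forall>x. (x \<in> {..<N} \<times> {..<N} \<longrightarrow> f x \<in> insert None (Some ` R)) \<and>
      (x \<notin> {..<N} \<times> {..<N} \<longrightarrow> f x = None)}"
  have finS: "finite S" unfolding S_def R_def by (intro finite_set_of_finite_funs) auto
  have patS: "pat \<theta> \<in> S" if th1: "\<bar>\<theta>\<bar> \<le> 1" for \<theta>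
  proof -
    have "pat \<theta> (k,l) \<in> insert None (Some ` R)" if k: "k < N" and l: "l < N" for k l
    proof (cases "Bm \<theta> $$ (k,l) = 0")
      case True then show ?thesis unfolding pat_def by simp
    next
      case False
      have G: "cis (ph \<theta> k) * Bm \<theta> $$ (k,l) * cnj (cis (ph \<theta> l)) = cis \<theta> * Bm \<theta> $$ (k,l)"
        using F[of \<theta>] k l unfolding Good_def Bm_def ph_def by blast
      then have "cis (ph \<theta> k) * cnj (cis (ph \<theta> l)) = cis \<theta>" using False
        by (metis mult.commute mult.left_commute mult_cancel_left)
      then have "cis (ph \<theta> k - ph \<theta> l) = cis \<theta>" by (simp add: cis_cnj cis_mult)
      then have "cis (ph \<theta> k - ph \<theta> l - \<theta>) = 1" by (simp add: cis_divide[symmetric])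
      then obtain m :: int where m: "ph \<theta> k - ph \<theta> l - \<theta> = 2 * pi * m" using cis_eq_1_int by blast
      have bnd: "\<bar>ph \<theta> j\<bar> \<le> real n * pi" for j
        using phase_bound[of "snd (F \<theta>)" j] F[of \<theta>] unfolding Good_def ph_def by auto
      have "\<bar>2 * pi * m\<bar> \<le> 2 * real n * pi + 1"
        using bnd[of k] bnd[of l] th1 m by linarith
      then have "\<bar>m\<bar> \<le> int n + 1" by (rule int_bound)
      then have "m \<in> {- (int n + 1) .. int n + 1}" by auto
      then have "real_of_int m \<in> R" unfolding R_def by (rule imageI)
      moreover have "(ph \<theta> k - ph \<theta> l - \<theta>) / (2 * pi) = real_of_int m" using m by simp
      ultimately show ?thesis unfolding pat_def using k l False by auto
    qed
    moreover have "pat \<theta> x = None" if "x \<notin> {..<N} \<times> {..<N}" for x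
      using that unfolding pat_def by (cases x) auto
    ultimately show ?thesis unfolding S_def by auto
  qed
  have infT: "infinite T"
  proof -
    have "inj (\<lambda>m::nat. 1 / real (Suc m))" by (rule injI) simp
    then show ?thesis unfolding T_def using infinite_UNIV_nat by (metis finite_imageD)
  qed
  have Tb: "\<bar>\<theta>\<bar> \<le> 1" if "\<theta> \<in> T" for \<theta> using that unfolding T_def by auto
  have "\<not> inj_on pat T"
  proof
    assume inj: "inj_on pat T"
    have "pat ` T \<subseteq> S" using patS Tb by auto
    then have "finite (pat ` T)" using finS finite_subset by auto
    then have "finite T" using inj finite_imageD by blast
    then show False using infT by simp
  qed
  then obtain \<theta>1 \<theta>2 where th: "\<theta>1 \<in> T" "\<theta>2 \<in> T" "\<theta>1 \<noteq> \<theta>2" "pat \<theta>1 = pat \<theta>2"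
    unfolding inj_on_def by blast
  define V where "V = fst (F \<theta>1)"
  define as1 where "as1 = snd (F \<theta>1)"
  define as2 where "as2 = snd (F \<theta>2)"
  have len1: "length as1 = n" and len2: "length as2 = n" using F unfolding Good_def as1_def as2_def by auto
  define lam where "lam j = (map2 (-) as1 as2) ! j" for j
  have lamq: "map lam [0..<n] = map2 (-) as1 as2"
    by (rule nth_equalityI) (auto simp: lam_def len1 len2)
  define d where "d k = phase (map lam [0..<n]) k" for k
  have dq: "d k = ph \<theta>1 k - ph \<theta>2 k" for k
    unfolding d_def lamq ph_def using phase_diff[of as1 as2 k] len1 len2 by (simp add: as1_def as2_def)
  define \<Delta> where "\<Delta> = dg N (\<lambda>k. \<i> * of_real (d k))"
  have Dt: "\<Delta> \<in> t_loc n" unfolding \<Delta>_def d_def N_def by (rule t_loc_mem)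
  have VS: "V \<in> SU_loc n" using F[of \<theta>1] unfolding Good_def V_def by auto
  define B where "B = cj V A"
  have BBm: "B = Bm \<theta>1" unfolding B_def Bm_def V_def ..
  have Vc: "V \<in> carrier_mat N N" using VS SU_loc_carrier N_def by auto
  have Ac: "A \<in> carrier_mat N N" using A N_def by simp
  have Bc: "B \<in> carrier_mat N N" unfolding B_def using Vc Ac by (rule cj_carrier)
  define \<phi> where "\<phi> = \<theta>1 - \<theta>2"
  have ph0: "\<phi> \<noteq> 0" using th(3) \<phi>_def by simp
  have comm: "\<Delta> * B - B * \<Delta> = (\<i> * of_real \<phi>) \<cdot>\<^sub>m B"
  proof (rule eq_matI)
    fix k l assume "k < dim_row ((\<i> * of_real \<phi>) \<cdot>\<^sub>m B)" "l < dim_col ((\<i> * of_real \<phi>) \<cdot>\<^sub>m B)"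
    then have k: "k < N" and l: "l < N" using Bc by auto
    have lhs: "(\<Delta> * B - B * \<Delta>) $$ (k,l) = (\<i> * of_real (d k) - \<i> * of_real (d l)) * B $$ (k,l)"
      unfolding \<Delta>_def by (rule comm_dg[OF Bc k l])
    have "d k - d l = \<phi>" if nz: "B $$ (k,l) \<noteq> 0"
    proof -
      have "pat \<theta>1 (k,l) = Some ((ph \<theta>1 k - ph \<theta>1 l - \<theta>1) / (2 * pi))"
        unfolding pat_def using k l nz BBm by simp
      moreover have "pat \<theta>2 (k,l) = (if Bm \<theta>2 $$ (k,l) \<noteq> 0 then Some ((ph \<theta>2 k - ph \<theta>2 l - \<theta>2) / (2 * pi)) else None)"
        unfolding pat_def using k l by simp
      ultimately have "(ph \<theta>1 k - ph \<theta>1 l - \<theta>1) / (2 * pi) = (ph \<theta>2 k - ph \<theta>2 l - \<theta>2) / (2 * pi)"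
        using th(4) by (auto split: if_splits)
      then have "ph \<theta>1 k - ph \<theta>1 l - \<theta>1 = ph \<theta>2 k - ph \<theta>2 l - \<theta>2" using pi_gt_zero by simp
      then show ?thesis unfolding dq \<phi>_def by linarith
    qed
    then have "(\<i> * of_real (d k) - \<i> * of_real (d l)) * B $$ (k,l) = (\<i> * of_real \<phi>) * B $$ (k,l)"
      by (cases "B $$ (k,l) = 0") (auto simp: algebra_simps simp flip: of_real_diff)
    then show "(\<Delta> * B - B * \<Delta>) $$ (k,l) = ((\<i> * of_real \<phi>) \<cdot>\<^sub>m B) $$ (k,l)"
      using lhs k l Bc by simp
  qed (use Bc in \<open>auto simp: \<Delta>_def\<close>)
  then show ?thesis using VS Dt ph0 unfolding B_def cj_def by blast
qed


theorem corollary3p4: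
  fixes n :: nat and A :: "complex mat"
  assumes "A \<in> carrier_mat (2^n) (2^n)"
  shows "(\<forall>C \<in> carrier_mat (2^n) (2^n). rot_symmetric (W_loc n C A)) \<longleftrightarrow>
         (\<exists>U \<in> SU_loc n. \<exists>\<Delta> \<in> t_loc n. \<exists>\<phi>::real. \<phi> \<noteq> 0 \<and>
            \<Delta> * (U * A * adj U) - (U * A * adj U) * \<Delta> = (\<i> * of_real \<phi>) \<cdot>\<^sub>m (U * A * adj U))"
proof
  assume "\<forall>C \<in> carrier_mat (2^n) (2^n). rot_symmetric (W_loc n C A)"
  then show "\<exists>U \<in> SU_loc n. \<exists>\<Delta> \<in> t_loc n. \<exists>\<phi>::real. \<phi> \<noteq> 0 \<and>
            \<Delta> * (U * A * adj U) - (U * A * adj U) * \<Delta> = (\<i> * of_real \<phi>) \<cdot>\<^sub>m (U * A * adj U)"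
    using hard_dir[OF assms] by blast
next
  assume "\<exists>U \<in> SU_loc n. \<exists>\<Delta> \<in> t_loc n. \<exists>\<phi>::real. \<phi> \<noteq> 0 \<and>
            \<Delta> * (U * A * adj U) - (U * A * adj U) * \<Delta> = (\<i> * of_real \<phi>) \<cdot>\<^sub>m (U * A * adj U)"
  then obtain U \<Delta> \<phi> where "U \<in> SU_loc n" "\<Delta> \<in> t_loc n" "\<phi> \<noteq> 0"
    "\<Delta> * (U * A * adj U) - (U * A * adj U) * \<Delta> = (\<i> * of_real \<phi>) \<cdot>\<^sub>m (U * A * adj U)" by blast
  then show "\<forall>C \<in> carrier_mat (2^n) (2^n). rot_symmetric (W_loc n C A)"
    using easy_dir[OF assms] by blast
qed

end
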